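(* Let $f,g\in\mathcal{S}$ and $\tau\in\mathbb{C}$, $\tau\ne0$. (1) If $\beta:=\beta_f(\tau)>0$, $\varepsilon\in(0,\beta)$, and there is $r_0\in(0,1)$ with $\sup_{r_0<|z|<1}|N_g(z)-N_f(z)|(1-|z|^2)<\varepsilon/|\tau|$, then $|\beta_g(\tau)-\beta_f(\tau)|\le\varepsilon$. (2) If $\beta_f(\tau)=0$, $\varepsilon>0$, and there is $r_0\in(0,1)$ with $\sup_{r_0<|z|<1}|N_g(z)-N_f(z)|(1-|z|^2)<\varepsilon/|\tau|$, then $\beta_g(\tau)\le\varepsilon$.
   Context: $\Delta$ unit disk; $\mathcal{S}$ the class of univalent $f$ on $\Delta$ with $f(0)=0,f'(0)=1$; $N_f=f''/f'$. For $\tau\in\mathbb{C}$, $[f'(z)]^\tau=\exp(\tau\log f'(z))$ with $\log f'(0)=0$, and $\beta_f(\tau)=\limsup_{r\to1^-}\frac{\log\int_{-\pi}^{\pi}|[f'(re^{i\theta})]^\tau|d\theta}{|\log(1-r)|}$. *)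

theory Defs
  imports "HOL-Analysis.Analysis" "HOL-Library.Liminf_Limsup"
begin

definition classS :: "(complex \<Rightarrow> complex) \<Rightarrow> bool" where
  "classS f \<longleftrightarrow> f holomorphic_on ball 0 1 \<and> inj_on f (ball 0 1) \<and> f 0 = 0 \<and> deriv f 0 = 1"

definition preSchwarz :: "(complex \<Rightarrow> complex) \<Rightarrow> complex \<Rightarrow> complex" where
  "preSchwarz f z = deriv (deriv f) z / deriv f z"

definition logderiv :: "(complex \<Rightarrow> complex) \<Rightarrow> complex \<Rightarrow> complex" where
  "logderiv f = (SOME L. L holomorphic_on ball 0 1 \<and> (\<forall>z\<in>ball 0 1. exp (L z) = deriv f z) \<and> L 0 = 0)"

definition derpow :: "(complex \<Rightarrow> complex) \<Rightarrow> complex \<Rightarrow> complex \<Rightarrow> complex" where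
  "derpow f \<tau> z = exp (\<tau> * logderiv f z)"

definition betaSpec :: "(complex \<Rightarrow> complex) \<Rightarrow> complex \<Rightarrow> ereal" where
  "betaSpec f \<tau> = Limsup (at_left (1::real))
     (\<lambda>r. ereal (ln (integral {-pi..pi} (\<lambda>\<theta>. norm (derpow f \<tau> (of_real r * cis \<theta>))))
                 / \<bar>ln (1 - r)\<bar>))"

end

theory Submission
  imports Defs "HOL-Complex_Analysis.Complex_Analysis"
begin

lemma classS_basic:
  assumes "classS f"
  shows "f holomorphic_on ball 0 1" "inj_on f (ball 0 1)" "f 0 = 0" "deriv f 0 = 1"
        "deriv f holomorphic_on ball 0 1" "\<And>z. z \<in> ball 0 1 \<Longrightarrow> deriv f z \<noteq> 0"
  using assms holomorphic_injective_imp_regular[of f "ball 0 1"] unfolding classS_def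
  by (auto intro: holomorphic_deriv)

lemma logderiv_ex:
  assumes "classS f"
  shows "\<exists>L. L holomorphic_on ball 0 1 \<and> (\<forall>z\<in>ball 0 1. exp (L z) = deriv f z) \<and> L 0 = 0"
proof -
  note b = classS_basic[OF assms]
  obtain L0 where L0: "L0 holomorphic_on ball 0 1" "\<And>z. z \<in> ball 0 1 \<Longrightarrow> deriv f z = exp (L0 z)"
    using contractible_imp_holomorphic_log[OF b(5) convex_imp_contractible[OF convex_ball] b(6)] by blast
  have e0: "exp (L0 0) = 1" using L0(2)[of 0] b(4) by simp
  show ?thesis
  proof (intro exI conjI ballI)
    show "(\<lambda>z. L0 z - L0 0) holomorphic_on ball 0 1" by (intro holomorphic_intros L0(1))
    fix z assume "z \<in> ball (0::complex) 1"
    then show "exp (L0 z - L0 0) = deriv f z" using L0(2) e0 by (simp add: exp_diff)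
  qed simp
qed

lemma logderiv_props:
  assumes "classS f"
  shows "logderiv f holomorphic_on ball 0 1" "\<And>z. z \<in> ball 0 1 \<Longrightarrow> exp (logderiv f z) = deriv f z"
        "logderiv f 0 = 0"
  using someI_ex[OF logderiv_ex[OF assms]] unfolding logderiv_def by auto

lemma deriv_logderiv:
  assumes "classS f" and z: "z \<in> ball 0 1"
  shows "deriv (logderiv f) z = preSchwarz f z"
proof -
  note b = classS_basic[OF assms(1)] and L = logderiv_props[OF assms(1)]
  have dL: "(logderiv f has_field_derivative deriv (logderiv f) z) (at z)"
    using L(1) z by (meson DERIV_deriv_iff_field_differentiable holomorphic_on_imp_differentiable_at open_ball)
  have "((\<lambda>w. exp (logderiv f w)) has_field_derivative exp (logderiv f z) * deriv (logderiv f) z) (at z)"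
    by (rule derivative_eq_intros dL)+ auto
  then have d1: "(deriv f has_field_derivative deriv f z * deriv (logderiv f) z) (at z)"
    using L(2) z
    by (auto intro: has_field_derivative_transform_within_open[where S="ball 0 1"])
  have d2: "(deriv f has_field_derivative deriv (deriv f) z) (at z)"
    using b(5) z by (meson DERIV_deriv_iff_field_differentiable holomorphic_on_imp_differentiable_at open_ball)
  have "deriv (deriv f) z = deriv f z * deriv (logderiv f) z"
    using DERIV_unique[OF d2 d1] .
  then show ?thesis using b(6)[OF z] unfolding preSchwarz_def by simp
qed


lemma radial_bound:
  fixes h :: "complex \<Rightarrow> complex"
  assumes hol: "h holomorphic_on ball 0 1" and r1: "0 \<le> r1" "r1 \<le> r" "r < 1"
    and u: "norm u = 1" and c: "0 \<le> c"
    and bnd: "\<And>t. r1 \<le> t \<Longrightarrow> t < 1 \<Longrightarrow> norm (deriv h (of_real t * u)) \<le> c / (1 - t)"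
  shows "norm (h (of_real r * u) - h (of_real r1 * u)) \<le> c * ln ((1 - r1) / (1 - r))"
proof -
  define Sm where "Sm = ln ((1 - r1) / (1 - r))"
  have Sm0: "0 \<le> Sm" unfolding Sm_def using r1 by auto
  define T where "T s = 1 - of_real (1 - r1) * exp (- s)" for s :: complex
  define H where "H s = h (T s * u)" for s
  define S where "S = closed_segment 0 (complex_of_real Sm)"
  have inS: "\<exists>\<sigma>. s = of_real \<sigma> \<and> 0 \<le> \<sigma> \<and> \<sigma> \<le> Sm" if "s \<in> S" for s
  proof -
    from that obtain v where v: "0 \<le> v" "v \<le> 1" "s = of_real v * of_real Sm"
      unfolding S_def closed_segment_def by (auto simp: scaleR_conv_of_real)
    then show ?thesis using Sm0 by (intro exI[of _ "v * Sm"]) (auto simp: mult_left_le_one_le)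
  qed
  have Treal: "T (of_real \<sigma>) = of_real (1 - (1 - r1) * exp (- \<sigma>))" for \<sigma>
    unfolding T_def by (simp flip: exp_of_real)
  have Tbd: "r1 \<le> 1 - (1 - r1) * exp (- \<sigma>) \<and> 1 - (1 - r1) * exp (- \<sigma>) \<le> r" if "0 \<le> \<sigma>" "\<sigma> \<le> Sm" for \<sigma>
  proof
    have "(1 - r1) * exp (- \<sigma>) \<le> (1 - r1)" using that r1 by (simp add: mult_left_le)
    then show "r1 \<le> 1 - (1 - r1) * exp (- \<sigma>)" by simp
    have "exp (- Sm) \<le> exp (- \<sigma>)" using that by simp
    moreover have "exp (- Sm) = (1 - r) / (1 - r1)" unfolding Sm_def using r1
      by (simp add: exp_minus exp_ln_iff ln_div) (simp add: exp_diff)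
    ultimately have "(1 - r1) * ((1 - r) / (1 - r1)) \<le> (1 - r1) * exp (- \<sigma>)"
      using r1 by (intro mult_left_mono) auto
    then show "1 - (1 - r1) * exp (- \<sigma>) \<le> r" using r1 by simp
  qed
  have der: "(H has_field_derivative deriv h (T s * u) * (of_real (1 - r1) * exp (- s) * u)) (at s within S)"
    if sS: "s \<in> S" for s
  proof -
    obtain \<sigma> where \<sigma>: "s = of_real \<sigma>" "0 \<le> \<sigma>" "\<sigma> \<le> Sm" using inS[OF sS] by blast
    have "norm (T s * u) = abs (1 - (1 - r1) * exp (- \<sigma>))"
      by (simp only: \<sigma>(1) Treal norm_mult u norm_of_real) simp
    then have "T s * u \<in> ball 0 1" using Tbd[OF \<sigma>(2,3)] r1 by simp
    then have dh: "(h has_field_derivative deriv h (T s * u)) (at (T s * u))"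
      using hol by (meson DERIV_deriv_iff_field_differentiable holomorphic_on_imp_differentiable_at open_ball)
    have dT: "((\<lambda>s. T s * u) has_field_derivative (of_real (1 - r1) * exp (- s) * u)) (at s)"
      unfolding T_def by (rule derivative_eq_intros refl)+ simp
    show ?thesis unfolding H_def
      using DERIV_chain2[OF dh dT] by (rule has_field_derivative_at_within)
  qed
  have nb: "norm (deriv h (T s * u) * (of_real (1 - r1) * exp (- s) * u)) \<le> c" if sS: "s \<in> S" for s
  proof -
    obtain \<sigma> where \<sigma>: "s = of_real \<sigma>" "0 \<le> \<sigma>" "\<sigma> \<le> Sm" using inS[OF sS] by blast
    define t where "t = 1 - (1 - r1) * exp (- \<sigma>)"
    have t: "r1 \<le> t" "t < 1" using Tbd[OF \<sigma>(2,3)] r1 unfolding t_def by auto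
    have "norm (deriv h (T s * u) * (of_real (1 - r1) * exp (- s) * u))
        = norm (deriv h (of_real t * u)) * (1 - t)"
    proof -
      have "T s * u = of_real t * u" by (simp add: \<sigma>(1) Treal t_def)
      moreover have "norm (of_real (1 - r1) * exp (- s) * u) = 1 - t"
        by (simp only: norm_mult u \<sigma>(1) norm_of_real flip: of_real_minus exp_of_real)
           (use r1 in \<open>simp add: t_def\<close>)
      ultimately show ?thesis by (simp only: norm_mult)
    qed
    also have "\<dots> \<le> c / (1 - t) * (1 - t)" using bnd[OF t] t by (intro mult_right_mono) auto
    also have "\<dots> = c" using t by simp
    finally show ?thesis .
  qed
  have "norm (H (of_real Sm) - H 0) \<le> c * norm (of_real Sm - 0 :: complex)"
    by (rule field_differentiable_bound[OF _ der nb]) (auto simp: S_def)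
  moreover have "H (of_real Sm) = h (of_real r * u)"
  proof -
    have "exp (- Sm) = (1 - r) / (1 - r1)" unfolding Sm_def using r1
      by (simp add: exp_minus exp_ln_iff ln_div) (simp add: exp_diff)
    then show ?thesis unfolding H_def Treal using r1 by simp
  qed
  moreover have "H 0 = h (of_real r1 * u)" unfolding H_def T_def by simp
  ultimately show ?thesis using Sm0 unfolding Sm_def by simp
qed


lemma omitted_small:
  assumes "classS F"
  shows "\<exists>w0. w0 \<notin> F ` ball 0 1 \<and> norm w0 \<le> 2"
proof (rule ccontr)
  assume nex: "\<not> (\<exists>w0. w0 \<notin> F ` ball 0 1 \<and> norm w0 \<le> 2)"
  have cov: "w \<in> F ` ball 0 1" if "norm w \<le> 2" for w using nex that by blast
  note b = classS_basic[OF assms]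
  obtain g where g: "g holomorphic_on F ` ball 0 1"
      "\<And>z. z \<in> ball 0 1 \<Longrightarrow> deriv F z * deriv g (F z) = 1"
      "\<And>z. z \<in> ball 0 1 \<Longrightarrow> g (F z) = z"
    using holomorphic_has_inverse[OF b(1) open_ball b(2)] by blast
  have sub: "cball 0 (3/2) \<subseteq> F ` ball 0 1" using cov by auto
  have "cmod ((deriv ^^ 1) g 0) \<le> fact 1 * 1 / (3/2) ^ 1"
  proof (rule Cauchy_higher_deriv_bound[where y=0])
    show "g holomorphic_on ball 0 (3/2)" using g(1) sub by (meson ball_subset_cball holomorphic_on_subset order_trans)
    show "continuous_on (cball 0 (3/2)) g" using g(1) sub
      by (meson holomorphic_on_imp_continuous_on holomorphic_on_subset)
    fix w assume "w \<in> ball (0::complex) (3/2)"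
    then have "w \<in> F ` ball 0 1" using sub by auto
    then obtain z where "z \<in> ball 0 1" "w = F z" by blast
    then show "g w \<in> ball 0 1" using g(3) by simp
  qed auto
  moreover have "deriv g 0 = 1" using g(2)[of 0] b(3,4) by simp
  ultimately show False by simp
qed

definition M0 :: real where
  "M0 = exp(pi * exp(pi * (2 + 2 * 1 + 12 * (2/3) / (1 - 2/3))))"

lemma growthS:
  assumes "classS F" and z: "norm z \<le> 1/2"
  shows "norm (F z) \<le> 2 * (1 + M0^2)"
proof -
  note b = classS_basic[OF assms(1)]
  obtain w0 where w0: "w0 \<notin> F ` ball 0 1" "norm w0 \<le> 2" using omitted_small[OF assms(1)] by blast
  have w00: "w0 \<noteq> 0" using w0(1) b(3) by force
  define q where "q z = 1 - F z / w0" for z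
  have qnz: "q z \<noteq> 0" if "z \<in> ball 0 1" for z
    using w0(1) w00 that unfolding q_def by (auto simp: field_simps)
  have holq: "q holomorphic_on ball 0 1" unfolding q_def using w00 by (intro holomorphic_intros b(1))
  obtain g0 where g0: "g0 holomorphic_on ball 0 1" "\<And>z. z \<in> ball 0 1 \<Longrightarrow> q z = g0 z ^ 2"
    using contractible_imp_holomorphic_sqrt[OF holq convex_imp_contractible[OF convex_ball] qnz] by blast
  have "g0 0 ^ 2 = 1" using g0(2)[of 0] b(3) unfolding q_def by simp
  define g where "g z = g0 z * g0 0" for z
  have gsq: "q z = g z ^ 2" if "z \<in> ball 0 1" for z
    using g0(2)[OF that] \<open>g0 0 ^ 2 = 1\<close> unfolding g_def by (simp add: power_mult_distrib)
  have g00: "g 0 = 1" using \<open>g0 0 ^ 2 = 1\<close> unfolding g_def by (simp add: power2_eq_square)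
  have holg: "g holomorphic_on ball 0 1" unfolding g_def by (intro holomorphic_intros g0(1))
  define G where "G \<zeta> = - g (3/4 * \<zeta>)" for \<zeta>
  have inb: "3/4 * \<zeta> \<in> ball 0 1" if "\<zeta> \<in> cball 0 1" for \<zeta> :: complex
    using that by (simp add: norm_mult)
  have "norm (G (4/3 * z)) \<le> exp(pi * exp(pi * (2 + 2 * 1 + 12 * (2/3) / (1 - 2/3))))"
  proof (rule Schottky[where f=G])
    have "(g \<circ> (\<lambda>\<zeta>. 3/4*\<zeta>)) holomorphic_on cball 0 1"
      by (rule holomorphic_on_compose_gen[OF _ holg]) (auto intro!: holomorphic_intros simp: inb)
    then show "G holomorphic_on cball 0 1" unfolding G_def o_def by (rule holomorphic_on_minus)
    show "norm (G 0) \<le> 1" unfolding G_def using g00 by simp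
    fix \<zeta> :: complex assume \<zeta>: "\<zeta> \<in> cball 0 1"
    have "g (3/4 * \<zeta>) \<noteq> 0" using gsq[OF inb[OF \<zeta>]] qnz[OF inb[OF \<zeta>]] by auto
    moreover have "g (3/4 * \<zeta>) \<noteq> -1"
    proof
      assume "g (3/4 * \<zeta>) = -1"
      then have "q (3/4 * \<zeta>) = 1" using gsq[OF inb[OF \<zeta>]] by simp
      then have "F (3/4 * \<zeta>) = F 0" using w00 b(3) unfolding q_def by simp
      then have "3/4 * \<zeta> = 0" using b(2) inb[OF \<zeta>] by (auto dest: inj_onD)
      then show False using \<open>g (3/4 * \<zeta>) = -1\<close> g00 by simp
    qed
    ultimately show "\<not> (G \<zeta> = 0 \<or> G \<zeta> = 1)" unfolding G_def by (auto simp: minus_equation_iff)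
  qed (use z in \<open>auto simp: norm_mult\<close>)
  then have gz: "norm (g z) \<le> M0" unfolding G_def M0_def by simp
  have zb: "z \<in> ball 0 1" using z by simp
  have "F z = w0 * (1 - g z ^ 2)" using gsq[OF zb] w00 unfolding q_def by (simp add: field_simps)
  then have "norm (F z) = norm w0 * norm (1 - g z ^ 2)" by (simp add: norm_mult)
  also have "\<dots> \<le> 2 * (1 + M0^2)"
  proof (rule mult_mono)
    have "norm (1 - g z ^ 2) \<le> 1 + norm (g z) ^ 2" by (metis norm_one norm_power norm_triangle_ineq4)
    also have "\<dots> \<le> 1 + M0^2" using gz by (simp add: power_mono)
    finally show "norm (1 - g z ^ 2) \<le> 1 + M0^2" .
  qed (use w0 in auto)
  finally show ?thesis .
qed


lemma mobius_norm_identity: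
  fixes a z :: complex
  shows "norm (1 + cnj a * z)^2 - norm (z + a)^2 = (1 - norm z^2) * (1 - norm a^2)"
  unfolding cmod_power2 by (simp add: power2_eq_square algebra_simps)

lemma mobius_in_disc:
  fixes a z :: complex
  assumes "norm a < 1" "norm z < 1"
  shows "norm ((z + a) / (1 + cnj a * z)) < 1" "1 + cnj a * z \<noteq> 0"
proof -
  have "norm (cnj a * z) < 1" using assms by (simp add: norm_mult) (metis mult_le_one norm_ge_zero less_le_not_le mult_strict_mono mult_1_right zero_less_one)
  then show nz: "1 + cnj a * z \<noteq> 0"
    by (metis add.inverse_unique norm_minus_cancel norm_one less_irrefl)
  have "0 < (1 - norm z^2) * (1 - norm a^2)" using assms by (simp add: power_less_one_iff abs_square_less_1)
  then have "norm (z + a)^2 < norm (1 + cnj a * z)^2" using mobius_norm_identity[of a z] by simp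
  then have "norm (z + a) < norm (1 + cnj a * z)" using power_less_imp_less_base by force
  then show "norm ((z + a) / (1 + cnj a * z)) < 1" using nz by (simp add: norm_divide divide_less_eq)
qed

lemma koebe_transform:
  assumes S: "classS f" and z0: "z0 \<in> ball 0 1"
  shows "classS (\<lambda>\<zeta>. (f ((\<zeta> + z0) / (1 + cnj z0 * \<zeta>)) - f z0) / (of_real (1 - norm z0^2) * deriv f z0))"
proof -
  note b = classS_basic[OF S]
  define \<phi> where "\<phi> \<zeta> = (\<zeta> + z0) / (1 + cnj z0 * \<zeta>)" for \<zeta>
  have nz0: "norm z0 < 1" using z0 by simp
  have \<phi>in: "\<phi> \<zeta> \<in> ball 0 1" and den: "1 + cnj z0 * \<zeta> \<noteq> 0" if "\<zeta> \<in> ball 0 1" for \<zeta>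
    using mobius_in_disc[OF nz0, of \<zeta>] that unfolding \<phi>_def by auto
  have c0r: "0 < 1 - norm z0^2" using nz0 by (simp add: abs_square_less_1)
  have c0: "of_real (1 - norm z0^2) \<noteq> (0::complex)"
    by (metis c0r of_real_eq_0_iff less_irrefl)
  have hol\<phi>: "\<phi> holomorphic_on ball 0 1" unfolding \<phi>_def using den by (intro holomorphic_intros) auto
  have holF: "(\<lambda>\<zeta>. (f (\<phi> \<zeta>) - f z0) / (of_real (1 - norm z0^2) * deriv f z0)) holomorphic_on ball 0 1"
  proof -
    have "(f \<circ> \<phi>) holomorphic_on ball 0 1"
      by (rule holomorphic_on_compose_gen[OF hol\<phi> b(1)]) (use \<phi>in in auto)
    then show ?thesis unfolding o_def by (intro holomorphic_intros) auto
  qed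
  have inj\<phi>: "inj_on \<phi> (ball 0 1)"
  proof (rule inj_onI)
    fix x y assume x: "x \<in> ball 0 1" and y: "y \<in> ball 0 1" and e: "\<phi> x = \<phi> y"
    then have "(x + z0) * (1 + cnj z0 * y) = (y + z0) * (1 + cnj z0 * x)"
      using den[OF x] den[OF y] unfolding \<phi>_def by (simp add: divide_eq_eq field_simps)
    then have "(x - y) * (1 - z0 * cnj z0) = 0" by (simp add: algebra_simps)
    moreover have "1 - z0 * cnj z0 \<noteq> 0" using c0 by (simp flip: complex_norm_square)
    ultimately show "x = y" by simp
  qed
  have injF: "inj_on (\<lambda>\<zeta>. (f (\<phi> \<zeta>) - f z0) / (of_real (1 - norm z0^2) * deriv f z0)) (ball 0 1)"
  proof (rule inj_onI)
    fix x y assume x: "x \<in> ball 0 1" and y: "y \<in> ball 0 1"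
      and e: "(f (\<phi> x) - f z0) / (of_real (1 - norm z0^2) * deriv f z0) = (f (\<phi> y) - f z0) / (of_real (1 - norm z0^2) * deriv f z0)"
    then have "f (\<phi> x) = f (\<phi> y)" using c0 b(6)[OF z0] by (simp add: divide_cancel_right)
    then have "\<phi> x = \<phi> y" using b(2) \<phi>in[OF x] \<phi>in[OF y] by (auto dest: inj_onD)
    then show "x = y" using inj\<phi> x y by (auto dest: inj_onD)
  qed
  have \<phi>0: "\<phi> 0 = z0" unfolding \<phi>_def by simp
  have d\<phi>: "(\<phi> has_field_derivative (1 - z0 * cnj z0)) (at 0)"
    unfolding \<phi>_def by (rule derivative_eq_intros refl | simp)+
  have df: "(f has_field_derivative deriv f z0) (at (\<phi> 0))"
    using b(1) z0 \<phi>0 by (metis DERIV_deriv_iff_field_differentiable holomorphic_on_imp_differentiable_at open_ball)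
  have "((\<lambda>\<zeta>. (f (\<phi> \<zeta>) - f z0) / (of_real (1 - norm z0^2) * deriv f z0)) has_field_derivative
          (deriv f z0 * (1 - z0 * cnj z0) - 0) / (of_real (1 - norm z0^2) * deriv f z0)) (at 0)"
    by (intro DERIV_cdivide DERIV_diff DERIV_chain2[OF df d\<phi>] DERIV_const)
  moreover have "(deriv f z0 * (1 - z0 * cnj z0) - 0) / (of_real (1 - norm z0^2) * deriv f z0) = 1"
    using c0 b(6)[OF z0] by (simp flip: complex_norm_square)
  ultimately have "deriv (\<lambda>\<zeta>. (f (\<phi> \<zeta>) - f z0) / (of_real (1 - norm z0^2) * deriv f z0)) 0 = 1"
    using DERIV_imp_deriv by fastforce
  then show ?thesis unfolding classS_def using holF injF \<phi>0 by (simp add: \<phi>_def)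
qed


lemma preSchwarz_bound:
  assumes S: "classS f" and z0: "z0 \<in> ball 0 1"
  shows "norm (preSchwarz f z0) \<le> 512 * (2 * (1 + M0^2)) / (1 - norm z0)"
proof -
  note b = classS_basic[OF S]
  define M1 where "M1 = 2 * (1 + M0^2)"
  have M1: "0 < M1" unfolding M1_def by (simp add: add_pos_nonneg)
  define d where "d = 1 - norm z0"
  have d: "0 < d" "d \<le> 1" using z0 unfolding d_def by auto
  define c where "c = 1 - norm z0^2"
  have cz: "(of_real c :: complex) = 1 - z0 * cnj z0"
    unfolding c_def by (simp only: of_real_diff of_real_1 complex_norm_square)
  have c_eq: "c = d * (1 + norm z0)" unfolding c_def d_def by (simp add: power2_eq_square algebra_simps)
  have z0n: "0 \<le> norm z0" "norm z0 < 1" using z0 by auto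
  have c: "0 < c" "c \<le> 2 * d" unfolding c_eq using d z0n
    by (simp add: add_pos_nonneg) (rule order_trans[OF mult_left_mono[of "1 + norm z0" 2 d]], use d z0n in auto)
  have cd: "d \<le> c" unfolding c_eq using d z0n by auto
  define F where "F \<zeta> = (f ((\<zeta> + z0) / (1 + cnj z0 * \<zeta>)) - f z0) / (of_real (1 - norm z0^2) * deriv f z0)" for \<zeta>
  have SF: "classS F" unfolding F_def by (rule koebe_transform[OF S z0])
  define B where "B = c * norm (deriv f z0) * M1"
  have B: "0 < B" unfolding B_def using c M1 b(6)[OF z0] by simp
  have ballsub: "ball z0 (d/4) \<subseteq> ball 0 1"
  proof
    fix w assume "w \<in> ball z0 (d/4)"
    then have "norm (w - z0) < d/4" using norm_minus_commute[of w z0] by (simp add: dist_norm)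
    moreover have "norm w \<le> norm (w - z0) + norm z0" using norm_triangle_ineq[of "w - z0" z0] by simp
    ultimately have "norm w < norm z0 + d/4" by simp
    then show "w \<in> ball 0 1" using d unfolding d_def by (simp add: field_simps)
  qed
  have fb: "norm (f w - f z0) \<le> B" if w: "w \<in> ball z0 (d/4)" for w
  proof -
    have wz: "norm (w - z0) < d/4" using w norm_minus_commute[of w z0] by (simp add: dist_norm)
    define D where "D = 1 - cnj z0 * w"
    have Deq: "D = of_real c - cnj z0 * (w - z0)"
      unfolding D_def cz by (simp add: algebra_simps)
    have "norm (cnj z0 * (w - z0)) = norm z0 * norm (w - z0)" by (simp add: norm_mult)
    also have "\<dots> \<le> 1 * (d/4)" using z0n wz by (intro mult_mono) auto
    finally have X: "norm (cnj z0 * (w - z0)) \<le> d/4" by simp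
    have "norm (of_real c :: complex) - norm (cnj z0 * (w - z0)) \<le> norm D"
      unfolding Deq by (rule norm_triangle_ineq2)
    then have "norm D \<ge> c - d/4" using X c by simp
    then have Dge: "norm D \<ge> 3/4 * d" using cd by simp
    then have D0: "D \<noteq> 0" using d by auto
    define \<zeta> where "\<zeta> = (w - z0) / D"
    have "norm \<zeta> \<le> (d/4) / (3/4 * d)" unfolding \<zeta>_def norm_divide
      using wz Dge d by (intro frac_le) auto
    then have \<zeta>n: "norm \<zeta> \<le> 1/2" using d by simp
    have c0: "of_real c \<noteq> (0::complex)" using c by simp
    have "(\<zeta> + z0) / (1 + cnj z0 * \<zeta>) = w"
    proof -
      have "\<zeta> + z0 = (w - z0 * cnj z0 * w) / D" unfolding \<zeta>_def D_def using D0[unfolded D_def]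
        by (simp add: field_simps)
      also have "\<dots> = w * of_real c / D" unfolding cz by (simp add: algebra_simps)
      finally have 1: "\<zeta> + z0 = w * of_real c / D" .
      have "1 + cnj z0 * \<zeta> = (1 - z0 * cnj z0) / D" unfolding \<zeta>_def D_def using D0[unfolded D_def]
        by (simp add: field_simps)
      also have "\<dots> = of_real c / D" unfolding cz by simp
      finally have 2: "1 + cnj z0 * \<zeta> = of_real c / D" .
      show ?thesis unfolding 1 2 using D0 c0 by simp
    qed
    then have "F \<zeta> = (f w - f z0) / (of_real c * deriv f z0)" unfolding F_def c_def by simp
    then have "f w - f z0 = of_real c * deriv f z0 * F \<zeta>" using c0 b(6)[OF z0] by simp
    then have "norm (f w - f z0) = c * norm (deriv f z0) * norm (F \<zeta>)" using c by (simp add: norm_mult)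
    also have "\<dots> \<le> c * norm (deriv f z0) * M1" using growthS[OF SF \<zeta>n] c unfolding M1_def
      by (intro mult_left_mono) auto
    finally show ?thesis unfolding B_def .
  qed
  have "(deriv ^^ 2) f = deriv (deriv f)" by (simp add: numeral_2_eq_2)
  have "norm ((deriv ^^ 2) f z0) \<le> fact 2 * (2 * B) / (d/8) ^ 2"
  proof (rule Cauchy_higher_deriv_bound[where y="f z0"])
    have sub: "cball z0 (d/8) \<subseteq> ball z0 (d/4)" using d by (intro cball_subset_ball_iff[THEN iffD2]) auto
    show "f holomorphic_on ball z0 (d/8)" using b(1) sub ballsub
      by (meson ball_subset_cball holomorphic_on_subset order_trans)
    show "continuous_on (cball z0 (d/8)) f" using b(1) sub ballsub
      by (meson holomorphic_on_imp_continuous_on holomorphic_on_subset order_trans)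
    fix w assume "w \<in> ball z0 (d/8)"
    then have "w \<in> ball z0 (d/4)" using d by auto
    then have "norm (f w - f z0) \<le> B" using fb by blast
    then show "f w \<in> ball (f z0) (2 * B)" using B norm_minus_commute[of "f w" "f z0"] by (simp add: dist_norm)
  qed (use d in auto)
  then have "norm (deriv (deriv f) z0) \<le> 256 * B / d^2"
    using \<open>(deriv ^^ 2) f = deriv (deriv f)\<close> by (simp add: power2_eq_square)
  then have "norm (preSchwarz f z0) \<le> 256 * B / d^2 / norm (deriv f z0)"
    unfolding preSchwarz_def norm_divide using b(6)[OF z0] by (intro divide_right_mono) auto
  also have "\<dots> = 256 * c * M1 / d^2" unfolding B_def using b(6)[OF z0] by simp
  also have "\<dots> \<le> 256 * (2 * d) * M1 / d^2" using c M1 d by (intro divide_right_mono mult_right_mono) auto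
  also have "\<dots> = 512 * M1 / d" using d by (simp add: power2_eq_square)
  finally show ?thesis unfolding M1_def d_def .
qed


lemma Q_compare:
  fixes X Y :: "real \<Rightarrow> real"
  assumes rr: "rr < 1" and K: "0 < K" and \<delta>: "0 < \<delta>"
    and h: "\<And>r. rr < r \<Longrightarrow> r < 1 \<Longrightarrow> 0 < Y r \<and> 0 < X r \<and> X r \<le> K * (1 - r) powr (- a) * Y r"
  shows "eventually (\<lambda>r. ln (X r) / \<bar>ln (1 - r)\<bar> \<le> ln (Y r) / \<bar>ln (1 - r)\<bar> + (a + \<delta>)) (at_left 1)"
proof -
  define b where "b = max rr (max 0 (1 - exp (- (\<bar>ln K\<bar> / \<delta>))))"
  have b1: "b < 1" unfolding b_def using rr by auto
  have P: "ln (X r) / \<bar>ln (1 - r)\<bar> \<le> ln (Y r) / \<bar>ln (1 - r)\<bar> + (a + \<delta>)" if r: "b < r" "r < 1" for r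
  proof -
    have rrr: "rr < r" "0 < r" using r unfolding b_def by auto
    have rr: "1 - r < exp (- (\<bar>ln K\<bar> / \<delta>))" using r unfolding b_def by auto
    define Lr where "Lr = - ln (1 - r)"
    have lnneg: "ln (1 - r) < 0" using r rrr by simp
    have absL: "\<bar>ln (1 - r)\<bar> = Lr" unfolding Lr_def using lnneg by simp
    have Lr0: "0 < Lr" unfolding Lr_def using lnneg by simp
    have "ln (1 - r) < - (\<bar>ln K\<bar> / \<delta>)" using rr r by (metis ln_exp ln_less_cancel_iff diff_gt_0_iff_gt exp_gt_zero)
    then have "\<bar>ln K\<bar> / \<delta> < Lr" unfolding Lr_def by simp
    then have "\<bar>ln K\<bar> < \<delta> * Lr" using \<delta> by (simp add: divide_less_eq mult.commute)
    then have lk: "ln K / Lr \<le> \<delta>" using Lr0 by (simp add: divide_le_eq)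
    obtain Y0 X0 where hy: "0 < Y r" "0 < X r" "X r \<le> K * (1 - r) powr (- a) * Y r" using h[OF rrr(1) r(2)] by blast
    have pos: "0 < K * (1 - r) powr (- a) * Y r" using K hy r by simp
    have "ln (X r) \<le> ln (K * (1 - r) powr (- a) * Y r)" using hy pos by simp
    also have "\<dots> = ln K + a * Lr + ln (Y r)"
      using K hy r by (simp add: ln_mult ln_powr Lr_def)
    finally have "ln (X r) / Lr \<le> (ln K + a * Lr + ln (Y r)) / Lr" using Lr0 by (simp add: divide_right_mono)
    also have "\<dots> = ln K / Lr + a + ln (Y r) / Lr" using Lr0 by (simp add: add_divide_distrib)
    finally show ?thesis unfolding absL using lk by simp
  qed
  show ?thesis unfolding eventually_at_left_field using b1 P by blast
qed


definition CS :: real where "CS = 512 * (2 * (1 + M0^2))"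

lemma CS_pos: "0 < CS" unfolding CS_def by (simp add: add_pos_nonneg)

lemma logderiv_growth:
  assumes S: "classS f" and z: "z \<in> ball 0 1"
  shows "norm (logderiv f z) \<le> CS * (- ln (1 - norm z))"
proof (cases "z = 0")
  case True then show ?thesis using logderiv_props(3)[OF S] by simp
next
  case False
  note L = logderiv_props[OF S]
  define u where "u = z / of_real (norm z)"
  have u: "norm u = 1" using False unfolding u_def by (simp add: norm_divide)
  have zu: "of_real (norm z) * u = z" using False unfolding u_def by simp
  have "norm (logderiv f (of_real (norm z) * u) - logderiv f (of_real 0 * u)) \<le> CS * ln ((1 - 0) / (1 - norm z))"
  proof (rule radial_bound[OF L(1)])
    fix t :: real assume t: "0 \<le> t" "t < 1"
    have tu: "of_real t * u \<in> ball 0 1" using t u by (simp add: norm_mult)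
    have "norm (of_real t * u) = t" using t u by (simp add: norm_mult)
    then show "norm (deriv (logderiv f) (of_real t * u)) \<le> CS / (1 - t)"
      using deriv_logderiv[OF S tu] preSchwarz_bound[OF S tu] unfolding CS_def by simp
  qed (use z u CS_pos in auto)
  then show ?thesis using zu L(3) z by (simp add: ln_div)
qed

definition Iint :: "(complex \<Rightarrow> complex) \<Rightarrow> complex \<Rightarrow> real \<Rightarrow> real" where
  "Iint f \<tau> r = integral {-pi..pi} (\<lambda>\<theta>. norm (derpow f \<tau> (of_real r * cis \<theta>)))"

lemma betaSpec_Iint: "betaSpec f \<tau> = Limsup (at_left 1) (\<lambda>r. ereal (ln (Iint f \<tau> r) / \<bar>ln (1 - r)\<bar>))"
  unfolding betaSpec_def Iint_def ..

lemma circ_in_ball: "0 \<le> r \<Longrightarrow> r < 1 \<Longrightarrow> of_real r * cis \<theta> \<in> ball (0::complex) 1"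
  by (simp add: norm_mult)

lemma derpow_cont:
  assumes S: "classS f" and r: "0 \<le> r" "r < 1"
  shows "continuous_on {-pi..pi} (\<lambda>\<theta>. norm (derpow f \<tau> (of_real r * cis \<theta>)))"
proof -
  have cL: "continuous_on (ball 0 1) (logderiv f)"
    using logderiv_props(1)[OF S] by (rule holomorphic_on_imp_continuous_on)
  have "continuous_on {-pi..pi} (\<lambda>\<theta>. logderiv f (of_real r * cis \<theta>))"
    by (rule continuous_on_compose2[OF cL]) (use r in \<open>auto intro!: continuous_intros simp: norm_mult\<close>)
  then show ?thesis unfolding derpow_def by (intro continuous_intros)
qed

lemma derpow_bounds:
  assumes S: "classS f" and r: "0 \<le> r" "r < 1"
  shows "exp (- (norm \<tau> * CS * (- ln (1 - r)))) \<le> norm (derpow f \<tau> (of_real r * cis \<theta>))"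
        "norm (derpow f \<tau> (of_real r * cis \<theta>)) \<le> exp (norm \<tau> * CS * (- ln (1 - r)))"
proof -
  have n: "norm (of_real r * cis \<theta>) = r" using r by (simp add: norm_mult)
  have "norm (\<tau> * logderiv f (of_real r * cis \<theta>)) \<le> norm \<tau> * (CS * (- ln (1 - r)))"
    unfolding norm_mult using logderiv_growth[OF S circ_in_ball[OF r], of \<theta>] n
    by (intro mult_left_mono) auto
  then have a: "norm (\<tau> * logderiv f (of_real r * cis \<theta>)) \<le> norm \<tau> * CS * (- ln (1 - r))" by simp
  have "- norm (\<tau> * logderiv f (of_real r * cis \<theta>)) \<le> Re (\<tau> * logderiv f (of_real r * cis \<theta>))"
    "Re (\<tau> * logderiv f (of_real r * cis \<theta>)) \<le> norm (\<tau> * logderiv f (of_real r * cis \<theta>))"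
    using abs_Re_le_cmod[of "\<tau> * logderiv f (of_real r * cis \<theta>)"] by linarith+
  then show "exp (- (norm \<tau> * CS * (- ln (1 - r)))) \<le> norm (derpow f \<tau> (of_real r * cis \<theta>))"
        "norm (derpow f \<tau> (of_real r * cis \<theta>)) \<le> exp (norm \<tau> * CS * (- ln (1 - r)))"
    unfolding derpow_def norm_exp_eq_Re using a by auto
qed

lemma Iint_pos:
  assumes S: "classS f" and r: "0 \<le> r" "r < 1"
  shows "0 < Iint f \<tau> r"
proof -
  define m where "m = exp (- (norm \<tau> * CS * (- ln (1 - r))))"
  have "integral {-pi..pi} (\<lambda>\<theta>. m) \<le> Iint f \<tau> r"
    unfolding Iint_def
  proof (rule integral_le)
    show "(\<lambda>\<theta>. norm (derpow f \<tau> (of_real r * cis \<theta>))) integrable_on {-pi..pi}"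
      by (intro integrable_continuous_interval derpow_cont[OF S r])
    show "(\<lambda>\<theta>. m) integrable_on {-pi..pi}" by (rule integrable_continuous_interval continuous_on_const)+
    show "\<And>\<theta>. \<theta> \<in> {-pi..pi} \<Longrightarrow> m \<le> norm (derpow f \<tau> (of_real r * cis \<theta>))"
      unfolding m_def by (rule derpow_bounds(1)[OF S r])
  qed
  moreover have "integral {-pi..pi} (\<lambda>\<theta>. m) = 2 * pi * m" by simp
  moreover have "0 < m" unfolding m_def by simp
  ultimately show ?thesis by (smt (verit) mult_pos_pos pi_gt_zero)
qed

lemma Iint_upper:
  assumes S: "classS f" and r: "0 \<le> r" "r < 1"
  shows "Iint f \<tau> r \<le> (2 * pi) * (1 - r) powr (- (norm \<tau> * CS)) * 1"
proof -
  have e: "exp (norm \<tau> * CS * (- ln (1 - r))) = (1 - r) powr (- (norm \<tau> * CS))"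
    using r by (simp add: powr_def)
  have "Iint f \<tau> r \<le> integral {-pi..pi} (\<lambda>\<theta>. exp (norm \<tau> * CS * (- ln (1 - r))))"
    unfolding Iint_def
  proof (rule integral_le)
    show "(\<lambda>\<theta>. norm (derpow f \<tau> (of_real r * cis \<theta>))) integrable_on {-pi..pi}"
      by (intro integrable_continuous_interval derpow_cont[OF S r])
    show "(\<lambda>\<theta>. exp (norm \<tau> * CS * (- ln (1 - r)))) integrable_on {-pi..pi}"
      by (rule integrable_continuous_interval continuous_on_const)+
    show "\<And>\<theta>. \<theta> \<in> {-pi..pi} \<Longrightarrow> norm (derpow f \<tau> (of_real r * cis \<theta>)) \<le> exp (norm \<tau> * CS * (- ln (1 - r)))"
      by (rule derpow_bounds(2)[OF S r])
  qed
  also have "\<dots> = (2 * pi) * (1 - r) powr (- (norm \<tau> * CS))" unfolding e by simp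
  finally show ?thesis by simp
qed

lemma beta_finite:
  assumes S: "classS f"
  shows "betaSpec f \<tau> \<le> ereal (norm \<tau> * CS + 1)"
proof -
  have ev: "eventually (\<lambda>r. ln (Iint f \<tau> r) / \<bar>ln (1 - r)\<bar> \<le> ln ((\<lambda>r. 1) r) / \<bar>ln (1 - r)\<bar> + (norm \<tau> * CS + 1)) (at_left 1)"
    by (rule Q_compare[where rr=0 and K="2*pi"]) (use Iint_pos[OF S] Iint_upper[OF S] in auto)
  have "betaSpec f \<tau> \<le> Limsup (at_left (1::real)) (\<lambda>r. ereal (norm \<tau> * CS + 1))"
    unfolding betaSpec_Iint by (rule Limsup_mono) (use ev in \<open>auto elim!: eventually_mono\<close>)
  also have "\<dots> = ereal (norm \<tau> * CS + 1)" by (rule Limsup_const) simp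
  finally show ?thesis .
qed


lemma beta_compare:
  assumes Sf: "classS f" and Sg: "classS g" and r0: "0 < r0" "r0 < 1" and c: "0 \<le> c" and \<delta>: "0 < \<delta>"
    and bnd: "\<And>z. r0 < norm z \<Longrightarrow> norm z < 1 \<Longrightarrow> norm (preSchwarz g z - preSchwarz f z) * (1 - (norm z)\<^sup>2) \<le> c"
  shows "betaSpec g \<tau> \<le> betaSpec f \<tau> + ereal (norm \<tau> * c + \<delta>)"
proof -
  note Lf = logderiv_props[OF Sf] and Lg = logderiv_props[OF Sg]
  define D where "D z = logderiv g z - logderiv f z" for z
  have holD: "D holomorphic_on ball 0 1" unfolding D_def by (intro holomorphic_intros Lf(1) Lg(1))
  have dD: "deriv D z = preSchwarz g z - preSchwarz f z" if z: "z \<in> ball 0 1" for z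
  proof -
    have "deriv D z = deriv (logderiv g) z - deriv (logderiv f) z" unfolding D_def
      using z Lf(1) Lg(1)
      by (intro deriv_diff) (meson holomorphic_on_imp_differentiable_at open_ball)+
    then show ?thesis using deriv_logderiv[OF Sf z] deriv_logderiv[OF Sg z] by simp
  qed
  define r1 where "r1 = (1 + r0) / 2"
  have r1: "r0 < r1" "r1 < 1" "0 \<le> r1" using r0 unfolding r1_def by auto
  have "bounded (D ` cball 0 r1)"
  proof (intro compact_imp_bounded compact_continuous_image compact_cball)
    show "continuous_on (cball 0 r1) D"
      using holomorphic_on_imp_continuous_on[OF holD] by (rule continuous_on_subset) (use r1 in auto)
  qed
  then obtain M where M: "\<And>w. w \<in> cball 0 r1 \<Longrightarrow> norm (D w) \<le> M" unfolding bounded_iff by blast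
  have Dbd: "norm (D (of_real r * cis \<theta>)) \<le> M + c * (- ln (1 - r))" if r: "r1 < r" "r < 1" for r \<theta>
  proof -
    have u: "norm (cis \<theta>) = 1" by simp
    have "norm (D (of_real r * cis \<theta>) - D (of_real r1 * cis \<theta>)) \<le> c * ln ((1 - r1) / (1 - r))"
    proof (rule radial_bound[OF holD r1(3) _ r(2) u c])
      show "r1 \<le> r" using r by simp
      fix t :: real assume t: "r1 \<le> t" "t < 1"
      have nt: "norm (of_real t * cis \<theta>) = t" using t r1 by (simp add: norm_mult)
      have tb: "of_real t * cis \<theta> \<in> ball 0 1" using nt t by simp
      define x where "x = norm (deriv D (of_real t * cis \<theta>))"
      have "x * (1 - t^2) \<le> c" unfolding x_def dD[OF tb] using bnd[of "of_real t * cis \<theta>"] nt t r1 by simp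
      moreover have "x * (1 - t) \<le> x * (1 - t^2)" unfolding x_def using t r1
        by (intro mult_left_mono) (auto simp: power2_eq_square intro!: mult_left_le_one_le)
      ultimately have "x * (1 - t) \<le> c" by linarith
      then show "norm (deriv D (of_real t * cis \<theta>)) \<le> c / (1 - t)" unfolding x_def using t
        by (simp add: pos_le_divide_eq)
    qed
    moreover have "norm (D (of_real r1 * cis \<theta>)) \<le> M" using M r1 by (simp add: norm_mult)
    moreover have "ln ((1 - r1) / (1 - r)) \<le> - ln (1 - r)" using r r1 by (simp add: ln_div)
    ultimately have "norm (D (of_real r * cis \<theta>)) \<le> M + c * (- ln (1 - r))"
      using c by (smt (verit) mult_left_mono norm_triangle_ineq2)
    then show ?thesis .
  qed
  define K where "K = exp (norm \<tau> * M)"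
  define a where "a = norm \<tau> * c"
  have ptw: "norm (derpow g \<tau> (of_real r * cis \<theta>)) \<le> K * (1 - r) powr (- a) * norm (derpow f \<tau> (of_real r * cis \<theta>))"
    if r: "r1 < r" "r < 1" for r \<theta>
  proof -
    have zb: "of_real r * cis \<theta> \<in> ball 0 1" using r r1 by (intro circ_in_ball) auto
    have "derpow g \<tau> (of_real r * cis \<theta>) = derpow f \<tau> (of_real r * cis \<theta>) * exp (\<tau> * D (of_real r * cis \<theta>))"
      unfolding derpow_def D_def by (simp add: algebra_simps flip: exp_add)
    then have e1: "norm (derpow g \<tau> (of_real r * cis \<theta>)) = norm (derpow f \<tau> (of_real r * cis \<theta>)) * norm (exp (\<tau> * D (of_real r * cis \<theta>)))"
      by (simp add: norm_mult)
    have "norm (exp (\<tau> * D (of_real r * cis \<theta>))) \<le> exp (norm (\<tau> * D (of_real r * cis \<theta>)))"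
      by (rule norm_exp)
    also have "\<dots> \<le> exp (norm \<tau> * (M + c * (- ln (1 - r))))"
      unfolding norm_mult using Dbd[OF r] by (simp add: mult_left_mono)
    also have "exp (norm \<tau> * (M + c * (- ln (1 - r)))) = K * (1 - r) powr (- a)"
      unfolding K_def a_def using r r1 by (simp add: powr_def algebra_simps flip: exp_add)
    finally have e2: "norm (exp (\<tau> * D (of_real r * cis \<theta>))) \<le> K * (1 - r) powr (- a)" .
    have "norm (derpow f \<tau> (of_real r * cis \<theta>)) * norm (exp (\<tau> * D (of_real r * cis \<theta>)))
        \<le> norm (derpow f \<tau> (of_real r * cis \<theta>)) * (K * (1 - r) powr (- a))"
      using e2 by (rule mult_left_mono) simp
    then show ?thesis unfolding e1 by (simp only: mult.commute)
  qed
  have Ib: "Iint g \<tau> r \<le> K * (1 - r) powr (- a) * Iint f \<tau> r" if r: "r1 < r" "r < 1" for r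
  proof -
    have r': "0 \<le> r" "r < 1" using r r1 by auto
    have "Iint g \<tau> r \<le> integral {-pi..pi} (\<lambda>\<theta>. K * (1 - r) powr (- a) * norm (derpow f \<tau> (of_real r * cis \<theta>)))"
      unfolding Iint_def
    proof (rule integral_le)
      show "(\<lambda>\<theta>. norm (derpow g \<tau> (of_real r * cis \<theta>))) integrable_on {-pi..pi}"
        by (intro integrable_continuous_interval derpow_cont[OF Sg r'])
      show "(\<lambda>\<theta>. K * (1 - r) powr (- a) * norm (derpow f \<tau> (of_real r * cis \<theta>))) integrable_on {-pi..pi}"
        by (intro integrable_continuous_interval continuous_intros derpow_cont[OF Sf r'])
    qed (use ptw[OF r] in auto)
    also have "\<dots> = K * (1 - r) powr (- a) * Iint f \<tau> r" unfolding Iint_def by simp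
    finally show ?thesis .
  qed
  have ev: "eventually (\<lambda>r. ln (Iint g \<tau> r) / \<bar>ln (1 - r)\<bar> \<le> ln (Iint f \<tau> r) / \<bar>ln (1 - r)\<bar> + (a + \<delta>)) (at_left 1)"
  proof (rule Q_compare[where rr=r1 and K=K])
    fix r assume r: "r1 < r" "r < 1"
    then have r': "0 \<le> r" "r < 1" using r1 by auto
    show "0 < Iint f \<tau> r \<and> 0 < Iint g \<tau> r \<and> Iint g \<tau> r \<le> K * (1 - r) powr (- a) * Iint f \<tau> r"
      using Iint_pos[OF Sf r'] Iint_pos[OF Sg r'] Ib[OF r] by simp
  qed (use r1 \<delta> in \<open>auto simp: K_def\<close>)
  have "betaSpec g \<tau> \<le> Limsup (at_left (1::real)) (\<lambda>r. ereal (ln (Iint f \<tau> r) / \<bar>ln (1 - r)\<bar>) + ereal (a + \<delta>))"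
    unfolding betaSpec_Iint by (rule Limsup_mono) (use ev in \<open>auto elim!: eventually_mono\<close>)
  also have "\<dots> = betaSpec f \<tau> + ereal (a + \<delta>)"
    unfolding betaSpec_Iint by (rule Limsup_add_ereal_right) auto
  finally show ?thesis unfolding a_def .
qed


lemma main_bounds:
  assumes Sf: "classS f" and Sg: "classS g" and \<tau>: "\<tau> \<noteq> 0" and e: "0 < \<epsilon>" and r0: "0 < r0" "r0 < 1"
    and sup: "(SUP z\<in>{z. r0 < norm z \<and> norm z < 1}.
               ereal (norm (preSchwarz g z - preSchwarz f z) * (1 - (norm z)\<^sup>2))) < ereal (\<epsilon> / norm \<tau>)"
  shows "\<exists>e'. e' \<le> \<epsilon> \<and> betaSpec g \<tau> \<le> betaSpec f \<tau> + ereal e' \<and> betaSpec f \<tau> \<le> betaSpec g \<tau> + ereal e'"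
proof -
  obtain c where c: "(SUP z\<in>{z. r0 < norm z \<and> norm z < 1}.
               ereal (norm (preSchwarz g z - preSchwarz f z) * (1 - (norm z)\<^sup>2))) < ereal c" "ereal c < ereal (\<epsilon> / norm \<tau>)"
    using ereal_dense2[OF sup] by blast
  have bnd: "norm (preSchwarz g z - preSchwarz f z) * (1 - (norm z)\<^sup>2) \<le> c" if z: "r0 < norm z" "norm z < 1" for z
  proof -
    have "ereal (norm (preSchwarz g z - preSchwarz f z) * (1 - (norm z)\<^sup>2)) \<le> (SUP z\<in>{z. r0 < norm z \<and> norm z < 1}.
               ereal (norm (preSchwarz g z - preSchwarz f z) * (1 - (norm z)\<^sup>2)))"
      by (rule SUP_upper) (use z in auto)
    from order.strict_trans1[OF this c(1)] show ?thesis by simp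
  qed
  have bnd': "norm (preSchwarz f z - preSchwarz g z) * (1 - (norm z)\<^sup>2) \<le> c" if z: "r0 < norm z" "norm z < 1" for z
    using bnd[OF z] by (simp add: norm_minus_commute)
  define z1 where "z1 = complex_of_real ((1 + r0) / 2)"
  have "norm z1 = (1 + r0) / 2" unfolding z1_def norm_of_real using r0 by simp
  then have z1: "r0 < norm z1" "norm z1 < 1" using r0 by auto
  have "0 \<le> norm (preSchwarz g z1 - preSchwarz f z1) * (1 - (norm z1)\<^sup>2)"
    using z1 by (intro mult_nonneg_nonneg) (auto simp: abs_square_le_1 less_imp_le)
  then have c0: "0 \<le> c" using bnd[OF z1] by linarith
  have t0: "0 < norm \<tau>" using \<tau> by simp
  have ca: "norm \<tau> * c < \<epsilon>" using c(2) t0 by (simp add: pos_less_divide_eq mult.commute)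
  define \<delta> where "\<delta> = (\<epsilon> - norm \<tau> * c) / 2"
  have \<delta>: "0 < \<delta>" "norm \<tau> * c + \<delta> \<le> \<epsilon>" unfolding \<delta>_def using ca by (auto simp: field_simps)
  show ?thesis
    using beta_compare[OF Sf Sg r0 c0 \<delta>(1) bnd, of \<tau>] beta_compare[OF Sg Sf r0 c0 \<delta>(1) bnd', of \<tau>] \<delta>(2)
    by blast
qed

theorem mainTheorem11:
  fixes f g :: "complex \<Rightarrow> complex" and \<tau> :: complex
  assumes "classS f" and "classS g" and "\<tau> \<noteq> 0"
  shows "(\<forall>\<epsilon> r0. betaSpec f \<tau> > 0 \<and> 0 < \<epsilon> \<and> ereal \<epsilon> < betaSpec f \<tau> \<and> 0 < r0 \<and> r0 < 1 \<and>
            (SUP z\<in>{z. r0 < norm z \<and> norm z < 1}.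
               ereal (norm (preSchwarz g z - preSchwarz f z) * (1 - (norm z)\<^sup>2)))
              < ereal (\<epsilon> / norm \<tau>)
          \<longrightarrow> \<bar>betaSpec g \<tau> - betaSpec f \<tau>\<bar> \<le> ereal \<epsilon>)
       \<and> (\<forall>\<epsilon> r0. betaSpec f \<tau> = 0 \<and> 0 < \<epsilon> \<and> 0 < r0 \<and> r0 < 1 \<and>
            (SUP z\<in>{z. r0 < norm z \<and> norm z < 1}.
               ereal (norm (preSchwarz g z - preSchwarz f z) * (1 - (norm z)\<^sup>2)))
              < ereal (\<epsilon> / norm \<tau>)
          \<longrightarrow> betaSpec g \<tau> \<le> ereal \<epsilon>)"
proof (intro conjI allI impI)
  fix \<epsilon> r0 :: real
  assume h: "betaSpec f \<tau> = 0 \<and> 0 < \<epsilon> \<and> 0 < r0 \<and> r0 < 1 \<and>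
            (SUP z\<in>{z. r0 < norm z \<and> norm z < 1}.
               ereal (norm (preSchwarz g z - preSchwarz f z) * (1 - (norm z)\<^sup>2)))
              < ereal (\<epsilon> / norm \<tau>)"
  then obtain e' where "e' \<le> \<epsilon>" "betaSpec g \<tau> \<le> betaSpec f \<tau> + ereal e'"
    using main_bounds[OF assms] by blast
  then show "betaSpec g \<tau> \<le> ereal \<epsilon>" using h by (simp add: order_trans)
next
  fix \<epsilon> r0 :: real
  assume h: "betaSpec f \<tau> > 0 \<and> 0 < \<epsilon> \<and> ereal \<epsilon> < betaSpec f \<tau> \<and> 0 < r0 \<and> r0 < 1 \<and>
            (SUP z\<in>{z. r0 < norm z \<and> norm z < 1}.
               ereal (norm (preSchwarz g z - preSchwarz f z) * (1 - (norm z)\<^sup>2)))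
              < ereal (\<epsilon> / norm \<tau>)"
  then obtain e' where e': "e' \<le> \<epsilon>" "betaSpec g \<tau> \<le> betaSpec f \<tau> + ereal e'" "betaSpec f \<tau> \<le> betaSpec g \<tau> + ereal e'"
    using main_bounds[OF assms] by blast
  have fin: "betaSpec f \<tau> \<le> ereal (norm \<tau> * CS + 1)" by (rule beta_finite[OF assms(1)])
  obtain bf where bf: "betaSpec f \<tau> = ereal bf" using h fin by (cases "betaSpec f \<tau>") auto
  obtain bg where bg: "betaSpec g \<tau> = ereal bg" using e'(2,3) unfolding bf by (cases "betaSpec g \<tau>") auto
  have "bg \<le> bf + e'" "bf \<le> bg + e'" using e'(2,3) unfolding bf bg by auto
  then show "\<bar>betaSpec g \<tau> - betaSpec f \<tau>\<bar> \<le> ereal \<epsilon>" unfolding bf bg using e'(1) by simp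
qed

end
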